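(* Let $J:\mathbb{R}^N\to\mathbb{R}$ be a finite-valued convex function, let $\Phi:\mathbb{R}^N\to\mathbb{R}^P$ be linear, let $x_0\in\mathbb{R}^N$, and write $T=T_{x_0}=\mathrm{Lin}(\partial J(x_0))^\perp$. Assume $\ker(\Phi)\cap T=\{0\}$. Define the linearized pre-certificate $$\eta_F=\Phi^*\,\operatorname*{argmin}\{\|p\| \;:\; p\in\mathbb{R}^P,\ \Phi^*p\in\mathrm{aff}(\partial J(x_0))\}.$$ Then $$\eta_F=\Phi^*\,(\Phi_T^{+})^{*}\, e_{x_0},\qquad\text{where } e_{x_0}=\mathrm{P}_T(\partial J(x_0))\in\mathbb{R}^N.$$
   Context: $\partial J(x)$ denotes the convex subdifferential of $J$ at $x$. For a convex set $E$, $\mathrm{aff}(E)$ is its affine hull and $\mathrm{Lin}(E)$ the linear subspace parallel to $\mathrm{aff}(E)$. For a subspace $T$, $\mathrm{P}_T$ is the orthogonal projection onto $T$ and $\Phi_T=\Phi\,\mathrm{P}_T$. For a matrix $A$, $A^*$ is its transpose and $A^+$ its Moore–Penrose pseudo-inverse. Since $\mathrm{aff}(\partial J(x_0))$ is parallel to $T^\perp$, the image $\mathrm{P}_T(\partial J(x_0))$ consists of a single vector, denoted $e_{x_0}$. Under the assumption $\ker(\Phi)\cap T=\{0\}$, the constraint set in the definition of $\eta_F$ is a non-empty affine space, so the minimal-norm $p$ is unique and $\eta_F$ is well defined. *)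

theory Defs
  imports "HOL-Analysis.Analysis"
begin

definition subdiff :: "(real^'n \<Rightarrow> real) \<Rightarrow> real^'n \<Rightarrow> (real^'n) set" where
  "subdiff J x = {g. \<forall>y. J y \<ge> J x + g \<bullet> (y - x)}"

definition lin_of :: "(real^'n) set \<Rightarrow> (real^'n) set" where
  "lin_of E = {a - b | a b. a \<in> affine hull E \<and> b \<in> affine hull E}"

definition proj_mat :: "(real^'n) set \<Rightarrow> real^'n^'n" where
  "proj_mat T = matrix (closest_point T)"

definition pinv :: "real^'n^'m \<Rightarrow> real^'m^'n" where
  "pinv A = (THE B. A ** B ** A = A \<and> B ** A ** B = B \<and>
                   transpose (A ** B) = A ** B \<and> transpose (B ** A) = B ** A)"

definition eta_F :: "(real^'n \<Rightarrow> real) \<Rightarrow> real^'n^'p \<Rightarrow> real^'n \<Rightarrow> real^'n" where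
  "eta_F J Phi x0 = transpose Phi *v
     (THE p. transpose Phi *v p \<in> affine hull (subdiff J x0) \<and>
        (\<forall>q. transpose Phi *v q \<in> affine hull (subdiff J x0) \<longrightarrow> norm p \<le> norm q))"

end

theory Submission
  imports Defs
begin

lemma subgrad_exists:
  fixes J :: "'a::euclidean_space \<Rightarrow> real"
  assumes cv: "convex_on UNIV J"
  shows "\<exists>g. \<forall>y. J y \<ge> J x + g \<bullet> (y - x)"
proof -
  define E where "E = {z::'a \<times> real. J (fst z) < snd z}"
  have convE: "convex E"
    unfolding convex_alt
  proof (intro ballI allI impI)
    fix z w :: "'a \<times> real" and u :: real
    assume z: "z \<in> E" and w: "w \<in> E" and u: "0 \<le> u \<and> u \<le> 1"
    have "J ((1 - u) *\<^sub>R fst z + u *\<^sub>R fst w) \<le> (1 - u) * J (fst z) + u * J (fst w)"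
      using convex_onD[OF cv, of u "fst z" "fst w"] u by auto
    also have "\<dots> < (1 - u) * snd z + u * snd w"
    proof (cases "u = 0")
      case True then show ?thesis using z by (simp add: E_def)
    next
      case False
      then have "u > 0" using u by auto
      have "(1 - u) * J (fst z) \<le> (1 - u) * snd z"
        using z u by (intro mult_left_mono) (auto simp: E_def)
      moreover have "u * J (fst w) < u * snd w"
        using w \<open>u > 0\<close> by (intro mult_strict_left_mono) (auto simp: E_def)
      ultimately show ?thesis by linarith
    qed
    finally show "(1 - u) *\<^sub>R z + u *\<^sub>R w \<in> E" by (simp add: E_def)
  qed
  have "(x, J x + 1) \<in> E" by (simp add: E_def)
  then have ne: "E \<noteq> {}" by auto
  have dj: "E \<inter> {(x, J x)} = {}" by (auto simp: E_def)
  obtain a b where a0: "a \<noteq> 0" and aE: "\<forall>z\<in>E. a \<bullet> z \<le> b"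
    and ax: "\<forall>z\<in>{(x, J x)}. a \<bullet> z \<ge> b"
    using separating_hyperplane_sets[OF convE convex_singleton ne _ dj] by blast
  obtain a1 a2 where aa: "a = (a1, a2)" by (cases a)
  have ax': "a1 \<bullet> x + a2 * J x \<ge> b" using ax aa by simp
  have key: "a1 \<bullet> y + a2 * t \<le> b" if "J y < t" for y t
    using aE that aa by (auto simp: E_def)
  have "a2 \<le> 0"
    using key[of x "J x + 1"] ax' by (simp add: algebra_simps)
  moreover have "a2 \<noteq> 0"
  proof
    assume z: "a2 = 0"
    then have "a1 \<noteq> 0" using a0 aa by (auto simp: zero_prod_def)
    have "a1 \<bullet> (x + a1) \<le> b" using key[of "x + a1" "J (x + a1) + 1"] z by simp
    then have "a1 \<bullet> a1 \<le> 0" using ax' z by (simp add: inner_add_right)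
    then show False using \<open>a1 \<noteq> 0\<close> by (metis inner_gt_zero_iff not_le)
  qed
  ultimately have a2: "a2 < 0" by simp
  define g where "g = (- 1 / a2) *\<^sub>R a1"
  have "J y \<ge> J x + g \<bullet> (y - x)" for y
  proof (rule ccontr)
    assume nt: "\<not> ?thesis"
    define c where "c = J x + g \<bullet> (y - x)"
    have "J y < (J y + c) / 2" using nt by (simp add: c_def)
    from key[OF this] ax' have "a1 \<bullet> y + a2 * ((J y + c) / 2) \<le> a1 \<bullet> x + a2 * J x" by linarith
    then have "a2 * ((J y + c) / 2 - J x) \<le> a1 \<bullet> (x - y)" by (simp add: algebra_simps inner_diff_right)
    then have "(J y + c) / 2 - J x \<ge> a1 \<bullet> (x - y) / a2"
      using a2 by (simp add: pos_divide_le_eq neg_divide_le_eq mult.commute)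
    moreover have "a1 \<bullet> (x - y) / a2 = g \<bullet> (y - x)"
      using a2 by (simp add: g_def inner_diff_right algebra_simps divide_simps)
    ultimately have "J x + g \<bullet> (y - x) \<le> J y" unfolding c_def by (simp add: field_simps)
    then show False using nt by simp
  qed
  then show ?thesis by blast
qed

lemma cp_char:
  fixes T :: "'a::euclidean_space set"
  assumes T: "subspace T" and t: "t \<in> T" and at: "a - t \<in> orthogonal_comp T"
  shows "closest_point T a = t"
proof -
  have "dist a t \<le> dist a z" if z: "z \<in> T" for z
  proof -
    have "t - z \<in> T" using T t z by (simp add: subspace_diff)
    then have o: "(a - t) \<bullet> (t - z) = 0" using at
      by (auto simp: orthogonal_comp_def orthogonal_def inner_commute)
    have "(a - z) \<bullet> (a - z) = ((a - t) + (t - z)) \<bullet> ((a - t) + (t - z))" by simp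
    also have "\<dots> = (a - t) \<bullet> (a - t) + (t - z) \<bullet> (t - z)"
      using o inner_commute[of "t - z" "a - t"] by (simp only: inner_add_left inner_add_right)
    finally have "(a - z) \<bullet> (a - z) = (a - t) \<bullet> (a - t) + (t - z) \<bullet> (t - z)" .
    then have "(a - t) \<bullet> (a - t) \<le> (a - z) \<bullet> (a - z)" by simp
    then show ?thesis by (simp add: dist_norm norm_le)
  qed
  then show ?thesis
    using closest_point_unique[OF subspace_imp_convex[OF T] closed_subspace[OF T] t] by auto
qed

lemma cp_decomp:
  fixes T :: "'a::euclidean_space set"
  assumes T: "subspace T"
  shows "closest_point T a \<in> T" "a - closest_point T a \<in> orthogonal_comp T"
proof -
  obtain v w where "a = v + w" "v \<in> T" "w \<in> orthogonal_comp T"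
    using subspace_sum_orthogonal_comp[OF T] set_plus_elim
    by (metis UNIV_I)
  then have "closest_point T a = v" using cp_char[OF T, of v a] by simp
  then show "closest_point T a \<in> T" "a - closest_point T a \<in> orthogonal_comp T"
    using \<open>a = v + w\<close> \<open>v \<in> T\<close> \<open>w \<in> _\<close> by auto
qed

lemma cp_linear:
  fixes T :: "'a::euclidean_space set"
  assumes T: "subspace T"
  shows "linear (closest_point T)"
proof (rule linearI)
  fix x y
  show "closest_point T (x + y) = closest_point T x + closest_point T y"
  proof (rule cp_char[OF T])
    show "closest_point T x + closest_point T y \<in> T"
      using cp_decomp[OF T] T by (simp add: subspace_add)
    have "x + y - (closest_point T x + closest_point T y) =
       (x - closest_point T x) + (y - closest_point T y)" by simp
    then show "x + y - (closest_point T x + closest_point T y) \<in> orthogonal_comp T"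
      using cp_decomp[OF T] subspace_orthogonal_comp by (metis subspace_add)
  qed
next
  fix c :: real and x
  show "closest_point T (c *\<^sub>R x) = c *\<^sub>R closest_point T x"
  proof (rule cp_char[OF T])
    show "c *\<^sub>R closest_point T x \<in> T"
      using cp_decomp[OF T] T by (simp add: subspace_scale)
    have "c *\<^sub>R x - c *\<^sub>R closest_point T x = c *\<^sub>R (x - closest_point T x)"
      by (simp add: algebra_simps)
    then show "c *\<^sub>R x - c *\<^sub>R closest_point T x \<in> orthogonal_comp T"
      using cp_decomp[OF T] subspace_orthogonal_comp by (metis subspace_scale)
  qed
qed

lemma adj: "(transpose A *v x) \<bullet> y = x \<bullet> ((A::real^'n^'m) *v y)"
  by (simp add: dot_lmul_matrix)

lemma sym_adj: "transpose A = A \<Longrightarrow> (A *v x) \<bullet> y = x \<bullet> ((A::real^'n^'n) *v y)"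
  by (metis adj)

lemma vec_eq_inner:
  fixes a b :: "'a::real_inner"
  assumes "\<And>y. a \<bullet> y = b \<bullet> y" shows "a = b"
proof -
  have "(a - b) \<bullet> (a - b) = 0" using assms[of "a - b"] by (simp add: inner_diff_left)
  then show ?thesis by simp
qed

lemma pinv_unique:
  fixes A :: "real^'n^'m" and B :: "real^'m^'n"
  assumes a1: "A ** B ** A = A" and a2: "B ** A ** B = B"
    and a3: "transpose (A ** B) = A ** B" and a4: "transpose (B ** A) = B ** A"
  shows "pinv A = B"
  unfolding pinv_def
proof (rule the_equality)
  show "A ** B ** A = A \<and> B ** A ** B = B \<and> transpose (A ** B) = A ** B \<and> transpose (B ** A) = B ** A"
    using assms by blast
next
  fix C
  assume "A ** C ** A = A \<and> C ** A ** C = C \<and> transpose (A ** C) = A ** C \<and> transpose (C ** A) = C ** A"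
  then have c1: "A ** C ** A = A" and c2: "C ** A ** C = C"
    and c3: "transpose (A ** C) = A ** C" and c4: "transpose (C ** A) = C ** A" by auto
  have tA: "transpose A = transpose A ** transpose C ** transpose A"
    by (metis c1 matrix_transpose_mul matrix_mul_assoc)
  have tA': "transpose A = transpose A ** transpose B ** transpose A"
    by (metis a1 matrix_transpose_mul matrix_mul_assoc)
  have "B = B ** (A ** B)" using a2 by (simp add: matrix_mul_assoc)
  also have "\<dots> = B ** transpose B ** transpose A"
    using a3 by (metis matrix_transpose_mul matrix_mul_assoc)
  also have "\<dots> = B ** transpose B ** (transpose A ** transpose C ** transpose A)"
    using tA by simp
  also have "\<dots> = B ** transpose (A ** B) ** transpose (A ** C)"
    by (simp add: matrix_transpose_mul matrix_mul_assoc)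
  also have "\<dots> = (B ** A ** B) ** A ** C"
    using a3 c3 by (simp add: matrix_mul_assoc)
  also have "\<dots> = B ** A ** C" using a2 by simp
  finally have hB: "B = B ** A ** C" .
  have "C = (C ** A) ** C" using c2 by (simp add: matrix_mul_assoc)
  also have "\<dots> = transpose A ** transpose C ** C"
    using c4 by (metis matrix_transpose_mul)
  also have "\<dots> = (transpose A ** transpose B ** transpose A) ** transpose C ** C"
    using tA' by simp
  also have "\<dots> = transpose (B ** A) ** transpose (C ** A) ** C"
    by (simp add: matrix_transpose_mul matrix_mul_assoc)
  also have "\<dots> = B ** A ** (C ** A ** C)"
    using a4 c4 by (simp add: matrix_mul_assoc)
  also have "\<dots> = B ** A ** C" using c2 by simp
  finally show "C = B" using hB by simp
qed

declare dot_lmul_matrix [simp]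

lemma key:
  fixes P :: "real^'n^'n" and Phi :: "real^'n^'p" and e :: "real^'n"
  assumes PP: "P ** P = P" and Ps: "transpose P = P"
    and inj: "\<And>v. Phi *v (P *v v) = 0 \<Longrightarrow> P *v v = 0"
    and e: "P *v e = e"
  shows "(THE p. transpose (Phi ** P) *v p = e \<and>
            (\<forall>q. transpose (Phi ** P) *v q = e \<longrightarrow> norm p \<le> norm q))
         = transpose (pinv (Phi ** P)) *v e"
proof -
  have PPv: "P *v (P *v x) = P *v x" for x using PP by (metis matrix_vector_mul_assoc)
  have Padj: "(P *v x) \<bullet> y = x \<bullet> (P *v y)" for x y using sym_adj[OF Ps] .
  have Phadj: "(transpose Phi *v x) \<bullet> y = x \<bullet> (Phi *v y)" for x y using adj .
  define G where "G = P ** transpose Phi ** Phi ** P"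
  have Gv: "G *v x = P *v (transpose Phi *v (Phi *v (P *v x)))" for x
    by (simp add: G_def flip: matrix_vector_mul_assoc)
  define K where "K = G + mat 1 - P"
  have Kv: "K *v x = G *v x + x - P *v x" for x
    by (simp add: K_def matrix_vector_mult_diff_rdistrib matrix_vector_mult_add_rdistrib)
  have Gin: "(G *v x) \<bullet> y = (Phi *v (P *v x)) \<bullet> (Phi *v (P *v y))" for x y
    by (simp add: Gv Padj Phadj)
  have GP: "G *v (P *v x) = G *v x" for x by (simp add: Gv PPv)
  have PG: "P *v (G *v x) = G *v x" for x by (simp add: Gv PPv)
  have Ksym: "(K *v x) \<bullet> y = x \<bullet> (K *v y)" for x y
  proof -
    have "(G *v x) \<bullet> y = x \<bullet> (G *v y)"
      using Gin[of x y] Gin[of y x] by (simp add: inner_commute)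
    then show ?thesis by (simp add: Kv inner_add_left inner_add_right inner_diff_left inner_diff_right Padj)
  qed
  have Kinj: "v = 0" if "K *v v = 0" for v
  proof -
    have "P *v (K *v v) = G *v v"
      by (simp add: Kv PG PPv matrix_vector_right_distrib matrix_vector_mult_diff_distrib)
    then have G0: "G *v v = 0" using that by simp
    then have "(Phi *v (P *v v)) \<bullet> (Phi *v (P *v v)) = 0" using Gin[of v v] by simp
    then have "P *v v = 0" using inj by simp
    then show ?thesis using that G0 by (simp add: Kv)
  qed
  obtain H where HK: "H ** K = mat 1"
    using matrix_left_invertible_ker[of K] Kinj by blast
  then have KH: "K ** H = mat 1" using matrix_left_right_inverse by blast
  have HKv: "H *v (K *v x) = x" for x using HK by (metis matrix_vector_mul_assoc matrix_vector_mul_lid)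
  have KHv: "K *v (H *v x) = x" for x using KH by (metis matrix_vector_mul_assoc matrix_vector_mul_lid)
  have KP: "K *v (P *v x) = P *v (K *v x)" for x
    by (simp add: Kv GP PG PPv matrix_vector_right_distrib matrix_vector_mult_diff_distrib)
  have HP: "H *v (P *v x) = P *v (H *v x)" for x
    by (metis HKv KHv KP)
  have H1P: "H *v (x - P *v x) = x - P *v x" for x
  proof -
    have "K *v (x - P *v x) = x - P *v x"
      by (simp add: Kv GP PPv matrix_vector_mult_diff_distrib)
    then show ?thesis by (metis HKv)
  qed
  have Hsym: "(H *v x) \<bullet> y = x \<bullet> (H *v y)" for x y
    by (metis KHv Ksym)
  have HsymM: "transpose H = H"
    unfolding matrix_eq
  proof
    fix x
    show "transpose H *v x = H *v x"
      by (rule vec_eq_inner) (simp add: adj Hsym)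
  qed
  have HG: "H *v (G *v x) = P *v x" for x
  proof -
    have "G *v x = K *v x - (x - P *v x)" by (simp add: Kv)
    then have "H *v (G *v x) = H *v (K *v x) - H *v (x - P *v x)"
      by (simp only: matrix_vector_mult_diff_distrib[of H "K *v x" "x - P *v x"])
    also have "\<dots> = x - (x - P *v x)" by (simp only: HKv H1P)
    finally show ?thesis by simp
  qed
  have HPx: "H *v (P *v x) = H *v x - (x - P *v x)" for x
    using H1P[of x] by (simp add: matrix_vector_mult_diff_distrib) (metis diff_diff_eq2 diff_add_cancel add_diff_cancel_left')
  have GH: "G *v (H *v x) = P *v x" for x
  proof -
    have "G *v (H *v x) = K *v (H *v x) - H *v x + P *v (H *v x)" by (simp add: Kv)
    then show ?thesis by (simp add: KHv flip: HP) (simp add: HPx)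
  qed
  define M where "M = Phi ** P"
  define B where "B = H ** P ** transpose Phi"
  have Mv: "M *v x = Phi *v (P *v x)" for x by (simp add: M_def flip: matrix_vector_mul_assoc)
  have Bv: "B *v y = H *v (P *v (transpose Phi *v y))" for y by (simp add: B_def flip: matrix_vector_mul_assoc)
  have tM: "transpose M = P ** transpose Phi" by (simp add: M_def matrix_transpose_mul Ps)
  have tMv: "transpose M *v q = P *v (transpose Phi *v q)" for q by (metis tM matrix_vector_mul_assoc)
  have BM: "B ** M = P"
    unfolding matrix_eq
  proof
    fix x
    have "(B ** M) *v x = H *v (G *v x)"
      by (simp add: Bv Mv Gv flip: matrix_vector_mul_assoc)
    then show "(B ** M) *v x = P *v x" by (simp add: HG)
  qed
  have p1: "M ** B ** M = M"
  proof -
    have "M ** B ** M = M ** P" using BM by (metis matrix_mul_assoc)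
    also have "\<dots> = M" by (metis M_def matrix_mul_assoc PP)
    finally show ?thesis .
  qed
  have p2: "B ** M ** B = B"
    unfolding BM matrix_eq
  proof
    fix y
    show "(P ** B) *v y = B *v y"
      by (simp add: Bv flip: matrix_vector_mul_assoc HP) (simp add: PPv)
  qed
  have p3: "transpose (M ** B) = M ** B"
    unfolding matrix_eq
  proof
    fix x
    show "transpose (M ** B) *v x = (M ** B) *v x"
    proof (rule vec_eq_inner)
      fix y
      have "(transpose (M ** B) *v x) \<bullet> y
          = x \<bullet> (Phi *v (P *v (H *v (P *v (transpose Phi *v y)))))"
        by (simp add: adj Mv Bv flip: matrix_vector_mul_assoc)
      also have "\<dots> = (transpose Phi *v x) \<bullet> (P *v (H *v (P *v (transpose Phi *v y))))"
        by (simp add: Phadj)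
      also have "\<dots> = (P *v (transpose Phi *v x)) \<bullet> (H *v (P *v (transpose Phi *v y)))"
        by (simp add: Padj)
      also have "\<dots> = (H *v (P *v (transpose Phi *v x))) \<bullet> (P *v (transpose Phi *v y))"
        by (simp add: Hsym)
      also have "\<dots> = (P *v (H *v (P *v (transpose Phi *v x)))) \<bullet> (transpose Phi *v y)"
        by (simp add: Padj)
      also have "\<dots> = (Phi *v (P *v (H *v (P *v (transpose Phi *v x))))) \<bullet> y"
        by (simp add: Phadj inner_commute)
      also have "\<dots> = ((M ** B) *v x) \<bullet> y"
        by (simp add: Mv Bv flip: matrix_vector_mul_assoc)
      finally show "(transpose (M ** B) *v x) \<bullet> y = ((M ** B) *v x) \<bullet> y" .
    qed
  qed
  have p4: "transpose (B ** M) = B ** M" using BM Ps by simp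
  have pinvM: "pinv M = B" using pinv_unique[OF p1 p2 p3 p4] .
  have He: "P *v (H *v e) = H *v e" using HP[of e] e by simp
  define ps where "ps = Phi *v (H *v e)"
  have tB: "transpose B *v e = ps"
  proof -
    have "transpose B = Phi ** (P ** H)"
      by (simp add: B_def matrix_transpose_mul Ps HsymM matrix_mul_assoc)
    then show ?thesis by (simp add: ps_def He flip: matrix_vector_mul_assoc)
  qed
  have sol: "transpose M *v ps = e"
  proof -
    have "transpose M *v ps = G *v (H *v e)"
      unfolding tMv by (simp add: ps_def Gv He)
    then show ?thesis by (simp add: GH e)
  qed
  have orth: "(q - ps) \<bullet> ps = 0" if q: "transpose M *v q = e" for q
  proof -
    have "ps = Phi *v (P *v (H *v e))" by (simp add: ps_def He)
    then have "(q - ps) \<bullet> ps = (P *v (transpose Phi *v (q - ps))) \<bullet> (H *v e)"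
      using adj[of Phi "q - ps" "P *v (H *v e)"] Padj[of "transpose Phi *v (q - ps)" "H *v e"]
      by metis
    also have "\<dots> = (transpose M *v q - transpose M *v ps) \<bullet> (H *v e)"
      unfolding tMv by (simp add: matrix_vector_mult_diff_distrib)
    also have "\<dots> = 0" using q sol by simp
    finally show ?thesis .
  qed
  have nq: "(norm q)\<^sup>2 = (norm ps)\<^sup>2 + (norm (q - ps))\<^sup>2" if q: "transpose M *v q = e" for q
  proof -
    have "orthogonal ps (q - ps)" using orth[OF q] by (simp add: orthogonal_def inner_commute)
    from norm_add_Pythagorean[OF this] show ?thesis by (metis add.commute diff_add_cancel)
  qed
  have "(THE p. transpose M *v p = e \<and> (\<forall>q. transpose M *v q = e \<longrightarrow> norm p \<le> norm q)) = ps"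
  proof (rule the_equality)
    show "transpose M *v ps = e \<and> (\<forall>q. transpose M *v q = e \<longrightarrow> norm ps \<le> norm q)"
    proof (intro conjI allI impI sol)
      fix q assume q: "transpose M *v q = e"
      have "(norm ps)\<^sup>2 \<le> (norm q)\<^sup>2" using nq[OF q] zero_le_power2[of "norm (q - ps)"] by linarith
      then show "norm ps \<le> norm q" using power2_le_imp_le norm_ge_zero by blast
    qed
  next
    fix p assume p: "transpose M *v p = e \<and> (\<forall>q. transpose M *v q = e \<longrightarrow> norm p \<le> norm q)"
    then have "norm p \<le> norm ps" using sol by blast
    then have "(norm p)\<^sup>2 \<le> (norm ps)\<^sup>2" using power_mono norm_ge_zero by blast
    moreover have "(norm p)\<^sup>2 = (norm ps)\<^sup>2 + (norm (p - ps))\<^sup>2" using nq p by blast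
    ultimately have "(norm (p - ps))\<^sup>2 = 0" using zero_le_power2[of "norm (p - ps)"] by linarith
    then show "p = ps" by simp
  qed
  then show ?thesis using pinvM tB by (simp add: M_def)
qed

lemma cp_sym:
  fixes T :: "'a::euclidean_space set"
  assumes T: "subspace T"
  shows "x \<bullet> closest_point T y = closest_point T x \<bullet> y"
proof -
  have o1: "(x - closest_point T x) \<bullet> closest_point T y = 0"
    using cp_decomp[OF T, of x] cp_decomp[OF T, of y]
    by (auto simp: orthogonal_comp_def orthogonal_def inner_commute)
  have o2: "closest_point T x \<bullet> (y - closest_point T y) = 0"
    using cp_decomp[OF T, of x] cp_decomp[OF T, of y]
    by (auto simp: orthogonal_comp_def orthogonal_def)
  from o1 o2 show ?thesis by (simp add: inner_diff_left inner_diff_right)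
qed

lemma cp_zero_iff:
  fixes T :: "'a::euclidean_space set"
  assumes T: "subspace T"
  shows "closest_point T w = 0 \<longleftrightarrow> w \<in> orthogonal_comp T"
proof
  assume "closest_point T w = 0"
  then show "w \<in> orthogonal_comp T" using cp_decomp(2)[OF T, of w] by simp
next
  assume "w \<in> orthogonal_comp T"
  then show "closest_point T w = 0" using cp_char[OF T subspace_0[OF T], of w] by simp
qed

theorem proposition1:
  fixes J :: "real^'n \<Rightarrow> real" and Phi :: "real^'n^'p" and x0 :: "real^'n"
  assumes "convex_on UNIV J"
    and "{x. Phi *v x = 0} \<inter> orthogonal_comp (lin_of (subdiff J x0)) = {0}"
  shows "eta_F J Phi x0 =
    (let T = orthogonal_comp (lin_of (subdiff J x0));
         e = the_elem ((\<lambda>g. proj_mat T *v g) ` subdiff J x0)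
     in transpose Phi *v (transpose (pinv (Phi ** proj_mat T)) *v e))"
proof -
  define S where "S = subdiff J x0"
  obtain s0 where s0: "s0 \<in> S"
    using subgrad_exists[OF assms(1), of x0] by (auto simp: S_def subdiff_def)
  define A where "A = affine hull S"
  have affA: "affine A" by (simp add: A_def)
  have s0A: "s0 \<in> A" using s0 by (simp add: A_def hull_inc)
  define L where "L = lin_of S"
  have Leq: "L = (\<lambda>x. x - s0) ` A"
  proof
    show "L \<subseteq> (\<lambda>x. x - s0) ` A"
    proof
      fix v assume "v \<in> L"
      then obtain a b where ab: "v = a - b" "a \<in> A" "b \<in> A"
        by (auto simp: L_def lin_of_def A_def)
      have "a + 1 *\<^sub>R (s0 - b) \<in> A" using mem_affine_3_minus[OF affA ab(2) s0A ab(3)] .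
      moreover have "v = (a + 1 *\<^sub>R (s0 - b)) - s0" using ab by simp
      ultimately show "v \<in> (\<lambda>x. x - s0) ` A" by blast
    qed
  next
    show "(\<lambda>x. x - s0) ` A \<subseteq> L"
      using s0A by (auto simp: L_def lin_of_def A_def)
  qed
  have subL: "subspace L" unfolding Leq using affine_diffs_subspace_subtract[OF affA s0A] .
  define T where "T = orthogonal_comp L"
  have subT: "subspace T" by (simp add: T_def subspace_orthogonal_comp)
  have TT: "orthogonal_comp T = L" by (simp add: T_def orthogonal_comp_self[OF subL])
  define P where "P = proj_mat T"
  have Pv: "P *v x = closest_point T x" for x
    unfolding P_def proj_mat_def using matrix_vector_mul(2)[OF cp_linear[OF subT]] by metis
  have PP: "P ** P = P"
    unfolding matrix_eq
  proof
    fix x show "(P ** P) *v x = P *v x"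
      by (simp add: Pv cp_decomp(1)[OF subT] closest_point_self flip: matrix_vector_mul_assoc)
  qed
  have Ps: "transpose P = P"
    unfolding matrix_eq
  proof
    fix x show "transpose P *v x = P *v x"
    proof (rule vec_eq_inner)
      fix y
      have "(transpose P *v x) \<bullet> y = x \<bullet> (P *v y)" by (rule adj)
      also have "\<dots> = (P *v x) \<bullet> y" by (simp add: Pv cp_sym[OF subT])
      finally show "(transpose P *v x) \<bullet> y = (P *v x) \<bullet> y" .
    qed
  qed
  have inj: "P *v v = 0" if "Phi *v (P *v v) = 0" for v
  proof -
    have "P *v v \<in> T" by (simp add: Pv cp_decomp(1)[OF subT])
    then show ?thesis using that assms(2) by (auto simp: T_def L_def S_def)
  qed
  define e where "e = P *v s0"
  have img: "(\<lambda>g. P *v g) ` S = {e}"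
  proof -
    have "P *v g = e" if g: "g \<in> S" for g
    proof -
      have "g \<in> A" using g by (simp add: A_def hull_inc)
      then have "g - s0 \<in> orthogonal_comp T" unfolding TT Leq by blast
      then have "closest_point T (g - s0) = 0" using cp_zero_iff[OF subT] by blast
      then show ?thesis using linear_diff[OF cp_linear[OF subT]] by (simp add: e_def Pv)
    qed
    moreover have "P *v s0 = e" by (simp add: e_def)
    ultimately show ?thesis using s0 by blast
  qed
  have Pe: "P *v e = e" using PP unfolding e_def by (metis matrix_vector_mul_assoc)
  have cons: "(transpose Phi *v q \<in> A) = (transpose (Phi ** P) *v q = e)" for q
  proof -
    define v where "v = transpose Phi *v q"
    have tr: "transpose (Phi ** P) *v q = P *v v"
      unfolding v_def by (metis matrix_transpose_mul Ps matrix_vector_mul_assoc)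
    have "v \<in> A \<longleftrightarrow> v - s0 \<in> L" unfolding Leq by auto
    also have "\<dots> \<longleftrightarrow> closest_point T (v - s0) = 0" using cp_zero_iff[OF subT] TT by blast
    also have "\<dots> \<longleftrightarrow> P *v v = e"
      using linear_diff[OF cp_linear[OF subT], of v s0] by (simp add: Pv e_def)
    finally show ?thesis using tr v_def by simp
  qed
  have "eta_F J Phi x0 = transpose Phi *v
     (THE p. transpose (Phi ** P) *v p = e \<and>
            (\<forall>q. transpose (Phi ** P) *v q = e \<longrightarrow> norm p \<le> norm q))"
    unfolding eta_F_def S_def[symmetric] A_def[symmetric] cons ..
  also have "\<dots> = transpose Phi *v (transpose (pinv (Phi ** P)) *v e)"
    by (subst key[of P Phi e, OF PP Ps _ Pe]) (use inj in auto)
  finally show ?thesis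
    unfolding Let_def S_def[symmetric] L_def[symmetric] T_def[symmetric] P_def[symmetric] img by simp
qed

end
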